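(* Consider the single-armed lazy restless bandit described in the context with fixed subsidy $\eta$, and let $\kappa=\frac{1}{1-\beta|p_{0,0}-p_{1,0}|}$, $b=\min\left\{1,\frac{R_1-R_0}{\rho_1-\rho_0}\right\}$, $c=\max\left\{1,\frac{R_1-R_0}{\rho_1-\rho_0}\right\}$. If $\beta<\frac{1+b}{4}$ or $0<|p_{0,0}-p_{1,0}|<\frac{1+b}{4}$, then for all $\pi\in[0,1]$, $\left|\frac{\partial V(\pi)}{\partial\pi}\right|,\ \left|\frac{\partial V_S(\pi)}{\partial\pi}\right|,\ \left|\frac{\partial V_{NS}(\pi)}{\partial\pi}\right|\le\kappa c(\rho_1-\rho_0)$, where at points of non-differentiability the right partial derivative is used.
   Context: Single-armed lazy restless bandit: an arm has a hidden state in $\{0,1\}$ evolving as a two-state Markov chain with transition probabilities $p_{i,j}$ ($p_{i,0}+p_{i,1}=1$). During each session the chain makes exactly $K\ge1$ transitions. In each session the decision maker plays the arm or not. If played with the arm in state $i$ at session start, an ACK is received with probability $\rho_i\in[0,1]$ and the expected reward is $R_i$; if not played, subsidy $\eta$ is received and nothing observed. Discount $\beta\in(0,1)$. Standing assumptions: $\rho_0<\rho_1$, $R_0<R_1$. Belief $\pi\in[0,1]$ = probability of state $0$. $R_S(\pi)=\pi R_0+(1-\pi)R_1$, $\rho(\pi)=\pi\rho_0+(1-\pi)\rho_1$, $\gamma_1(\pi)=\frac{(1-\pi)\rho_1p_{1,0}+\pi\rho_0p_{0,0}}{\rho_1(1-\pi)+\rho_0\pi}$, $\gamma_0(\pi)=\frac{(1-\pi)(1-\rho_1)p_{1,0}+\pi(1-\rho_0)p_{0,0}}{(1-\rho_1)(1-\pi)+(1-\rho_0)\pi}$,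 $\gamma_2(\pi)=(p_{0,0}-p_{1,0})^K\pi+p_{1,0}\sum_{j=0}^{K-1}(p_{0,0}-p_{1,0})^j$. $V_S,V_{NS},V$ are the unique bounded solution of $V_S(\pi)=R_S(\pi)+\beta\big(\rho(\pi)V(\gamma_1(\pi))+(1-\rho(\pi))V(\gamma_0(\pi))\big)$, $V_{NS}(\pi)=\eta+\beta V(\gamma_2(\pi))$, $V(\pi)=\max\{V_S(\pi),V_{NS}(\pi)\}$ (a term with zero coefficient is taken to be $0$). *)

theory Defs
  imports "HOL-Analysis.Analysis"
begin

text \<open>Belief pi = probability of state 0.
  Transition probabilities p00 = p_{0,0}, p10 = p_{1,0}.
  Division by zero yields 0 in Isabelle; this only happens when the
  coefficient of the corresponding term is 0, matching the convention
  that a term with zero coefficient is 0.\<close>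

definition RS :: "real \<Rightarrow> real \<Rightarrow> real \<Rightarrow> real" where
  "RS R0 R1 \<pi> = \<pi> * R0 + (1 - \<pi>) * R1"

definition rhoB :: "real \<Rightarrow> real \<Rightarrow> real \<Rightarrow> real" where
  "rhoB \<rho>0 \<rho>1 \<pi> = \<pi> * \<rho>0 + (1 - \<pi>) * \<rho>1"

definition gamma1 :: "real \<Rightarrow> real \<Rightarrow> real \<Rightarrow> real \<Rightarrow> real \<Rightarrow> real" where
  "gamma1 p00 p10 \<rho>0 \<rho>1 \<pi> =
     ((1 - \<pi>) * \<rho>1 * p10 + \<pi> * \<rho>0 * p00) / (\<rho>1 * (1 - \<pi>) + \<rho>0 * \<pi>)"

definition gamma0 :: "real \<Rightarrow> real \<Rightarrow> real \<Rightarrow> real \<Rightarrow> real \<Rightarrow> real" where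
  "gamma0 p00 p10 \<rho>0 \<rho>1 \<pi> =
     ((1 - \<pi>) * (1 - \<rho>1) * p10 + \<pi> * (1 - \<rho>0) * p00)
       / ((1 - \<rho>1) * (1 - \<pi>) + (1 - \<rho>0) * \<pi>)"

definition gamma2 :: "real \<Rightarrow> real \<Rightarrow> nat \<Rightarrow> real \<Rightarrow> real" where
  "gamma2 p00 p10 K \<pi> =
     (p00 - p10) ^ K * \<pi> + p10 * (\<Sum>j<K. (p00 - p10) ^ j)"

end

theory Submission
  imports Defs
begin


lemma g1_range:
  fixes p00 p10 r0 r1 x :: real
  assumes "0 \<le> p00" "p00 \<le> 1" "0 \<le> p10" "p10 \<le> 1" "0 \<le> r0" "r0 < r1" "r1 \<le> 1"
    and "x \<in> {0..1}"
  shows "gamma1 p00 p10 r0 r1 x \<in> {0..1}"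
proof -
  let ?n = "(1 - x) * r1 * p10 + x * r0 * p00"
  let ?d = "r1 * (1 - x) + r0 * x"
  have n0: "0 \<le> ?n" using assms by auto
  have nd: "?n \<le> ?d"
  proof -
    have "(1 - x) * r1 * p10 \<le> (1 - x) * r1" using assms by (simp add: mult_left_le)
    moreover have "x * r0 * p00 \<le> x * r0" using assms by (simp add: mult_left_le)
    ultimately show ?thesis by (simp add: algebra_simps)
  qed
  show ?thesis unfolding gamma1_def
    using n0 nd by (auto simp: divide_le_eq_1 intro: divide_nonneg_nonneg)
qed

lemma g0_range:
  fixes p00 p10 r0 r1 x :: real
  assumes "0 \<le> p00" "p00 \<le> 1" "0 \<le> p10" "p10 \<le> 1" "0 \<le> r0" "r0 < r1" "r1 \<le> 1"
    and "x \<in> {0..1}"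
  shows "gamma0 p00 p10 r0 r1 x \<in> {0..1}"
proof -
  let ?n = "(1 - x) * (1 - r1) * p10 + x * (1 - r0) * p00"
  let ?d = "(1 - r1) * (1 - x) + (1 - r0) * x"
  have n0: "0 \<le> ?n" using assms by auto
  have nd: "?n \<le> ?d"
  proof -
    have "(1 - x) * (1 - r1) * p10 \<le> (1 - x) * (1 - r1)" using assms by (simp add: mult_left_le)
    moreover have "x * (1 - r0) * p00 \<le> x * (1 - r0)" using assms by (simp add: mult_left_le)
    ultimately show ?thesis by (simp add: algebra_simps)
  qed
  show ?thesis unfolding gamma0_def
    using n0 nd by (auto simp: divide_le_eq_1 intro: divide_nonneg_nonneg)
qed

lemma g2_Suc: "gamma2 p00 p10 (Suc K) x = p10 + (p00 - p10) * gamma2 p00 p10 K x"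
  unfolding gamma2_def sum.lessThan_Suc_shift by (simp add: sum_distrib_left algebra_simps)

lemma g2_range:
  fixes p00 p10 x :: real
  assumes "0 \<le> p00" "p00 \<le> 1" "0 \<le> p10" "p10 \<le> 1" "x \<in> {0..1}"
  shows "gamma2 p00 p10 K x \<in> {0..1}"
proof (induction K)
  case 0 then show ?case using assms by (simp add: gamma2_def)
next
  case (Suc K)
  define t where "t = gamma2 p00 p10 K x"
  have t: "0 \<le> t" "t \<le> 1" using Suc t_def by auto
  have e: "p10 + (p00 - p10) * t = t * p00 + (1 - t) * p10" by (simp add: algebra_simps)
  have "0 \<le> t * p00 + (1 - t) * p10" using t assms by simp
  moreover have "t * p00 + (1 - t) * p10 \<le> t * 1 + (1 - t) * 1"
    using t assms by (intro add_mono mult_left_mono) auto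
  ultimately show ?case unfolding g2_Suc t_def[symmetric] e by simp
qed

lemma g2_diff: "gamma2 p00 p10 K x - gamma2 p00 p10 K y = (p00 - p10) ^ K * (x - y)"
  unfolding gamma2_def by (simp add: algebra_simps)


lemma abs3: "\<bar>a + b + c\<bar> \<le> \<bar>a\<bar> + \<bar>b\<bar> + \<bar>c :: real\<bar>"
  by (metis abs_triangle_ineq add_right_mono order_trans)

lemma max_diff_le: "\<bar>max a b - max c e\<bar> \<le> max \<bar>a - c\<bar> \<bar>b - (e::real)\<bar>"
  by (simp add: max_def abs_if)

lemma cont_lip:
  fixes p00 p10 r0 r1 L \<delta> x y :: real and V :: "real \<Rightarrow> real"
  assumes p: "0 \<le> p00" "p00 \<le> 1" "0 \<le> p10" "p10 \<le> 1"
    and r: "0 \<le> r0" "r0 < r1" "r1 \<le> 1"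
    and L: "0 \<le> L"
    and lip: "\<And>a b. a \<in> {0..1} \<Longrightarrow> b \<in> {0..1} \<Longrightarrow> \<bar>V a - V b\<bar> \<le> L * \<bar>a - b\<bar> + \<delta>"
    and xy: "0 \<le> x" "x < y" "y \<le> 1"
  shows "\<bar>(rhoB r0 r1 x * V (gamma1 p00 p10 r0 r1 x) + (1 - rhoB r0 r1 x) * V (gamma0 p00 p10 r0 r1 x))
        - (rhoB r0 r1 y * V (gamma1 p00 p10 r0 r1 y) + (1 - rhoB r0 r1 y) * V (gamma0 p00 p10 r0 r1 y))\<bar>
        \<le> L * \<bar>p00 - p10\<bar> * (y - x) + \<delta>"
proof -
  define rr where "rr = rhoB r0 r1"
  define d where "d = p00 - p10"
  define u where "u = (\<lambda>t. t * r0 / rr t)"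
  define v where "v = (\<lambda>t. t * (1 - r0) / (1 - rr t))"
  define g1 where "g1 = gamma1 p00 p10 r0 r1"
  define g0 where "g0 = gamma0 p00 p10 r0 r1"
  have rr_eq: "rr t = t * r0 + (1 - t) * r1" for t unfolding rr_def rhoB_def by simp
  have rr1: "1 - rr t = t * (1 - r0) + (1 - t) * (1 - r1)" for t unfolding rr_eq by (simp add: algebra_simps)
  have rlt: "rr y < rr x"
  proof -
    have "rr x - rr y = (y - x) * (r1 - r0)" unfolding rr_eq by (simp add: algebra_simps)
    moreover have "0 < (y - x) * (r1 - r0)" using xy r by simp
    ultimately show ?thesis by linarith
  qed
  have rge: "r0 \<le> rr t" "rr t \<le> r1" if "0 \<le> t" "t \<le> 1" for t
  proof -
    have "rr t = r0 + (1 - t) * (r1 - r0)" "rr t = r1 - t * (r1 - r0)" unfolding rr_eq by (simp_all add: algebra_simps)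
    moreover have "0 \<le> (1 - t) * (r1 - r0)" "0 \<le> t * (r1 - r0)" using that r by auto
    ultimately show "r0 \<le> rr t" "rr t \<le> r1" by linarith+
  qed
  note rgx = rge[OF xy(1) order.trans[OF less_imp_le[OF xy(2)] xy(3)]]
  note rgy = rge[OF order.trans[OF xy(1) less_imp_le[OF xy(2)]] xy(3)]
  have x01: "x \<in> {0..1}" and y01: "y \<in> {0..1}" using xy by auto
  have g1e: "g1 t = p10 + d * u t" if "rr t \<noteq> 0" for t
  proof -
    have e1: "r1 * (1 - t) + r0 * t = rr t" unfolding rr_eq by (simp add: algebra_simps)
    have e2: "(1 - t) * r1 * p10 + t * r0 * p00 = p10 * rr t + d * (t * r0)"
      unfolding rr_eq d_def by (simp add: algebra_simps)
    show ?thesis unfolding g1_def gamma1_def u_def e1 e2 using that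
      by (simp add: add_divide_distrib)
  qed
  have g0e: "g0 t = p10 + d * v t" if "1 - rr t \<noteq> 0" for t
  proof -
    have e1: "(1 - r1) * (1 - t) + (1 - r0) * t = 1 - rr t" unfolding rr_eq by (simp add: algebra_simps)
    have e2: "(1 - t) * (1 - r1) * p10 + t * (1 - r0) * p00 = p10 * (1 - rr t) + d * (t * (1 - r0))"
      unfolding rr_eq d_def by (simp add: algebra_simps)
    show ?thesis unfolding g0_def gamma0_def v_def e1 e2 using that
      by (simp add: add_divide_distrib)
  qed
  have F1: "rr y * \<bar>g1 x - g1 y\<bar> = \<bar>d\<bar> * (rr y * (u y - u x))"
  proof (cases "rr y = 0")
    case True then show ?thesis by simp
  next
    case False
    then have ry: "0 < rr y" using rgy r by linarith
    then have rx: "0 < rr x" using rlt by linarith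
    have "y * r0 * rr x - x * r0 * rr y = r0 * r1 * (y - x)" unfolding rr_eq by (simp add: algebra_simps)
    also have "\<dots> \<ge> 0" using r xy by simp
    finally have "u x \<le> u y" unfolding u_def using rx ry by (simp add: field_simps)
    moreover have "g1 x - g1 y = d * (u x - u y)" using g1e rx ry by (simp add: algebra_simps)
    ultimately show ?thesis using ry by (simp add: abs_mult)
  qed
  have F2: "(1 - rr x) * \<bar>g0 x - g0 y\<bar> = \<bar>d\<bar> * ((1 - rr x) * (v y - v x))"
  proof (cases "1 - rr x = 0")
    case True then show ?thesis by simp
  next
    case False
    then have rx: "0 < 1 - rr x" using rgx r by linarith
    then have ry: "0 < 1 - rr y" using rlt by linarith
    have "y * (1 - r0) * (1 - rr x) - x * (1 - r0) * (1 - rr y) = (1 - r0) * (1 - r1) * (y - x)"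
      unfolding rr_eq by (simp add: algebra_simps)
    also have "\<dots> \<ge> 0" using r xy by simp
    finally have "v x \<le> v y" unfolding v_def using rx ry by (simp add: field_simps)
    moreover have "g0 x - g0 y = d * (v x - v y)" using g0e rx ry by (simp add: algebra_simps)
    ultimately show ?thesis using rx by (simp add: abs_mult)
  qed
  have F3: "\<bar>g1 x - g0 y\<bar> = \<bar>d\<bar> * (v y - u x)"
  proof -
    have rx: "0 < rr x" using rlt rgy r by linarith
    have ry: "0 < 1 - rr y" using rlt rgx r by linarith
    have "x * r0 \<le> x * rr x" using rgx xy by (simp add: mult_left_mono)
    then have ux: "u x \<le> x" unfolding u_def using rx by (simp add: field_simps)
    have "y * (1 - rr y) \<le> y * (1 - r0)" using rgy xy by (simp add: mult_left_mono)
    then have vy: "y \<le> v y" unfolding v_def using ry by (simp add: field_simps)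
    have "g1 x - g0 y = d * (u x - v y)" using g1e g0e rx ry by (simp add: algebra_simps)
    then show ?thesis using ux vy xy by (simp add: abs_mult)
  qed
  have F4: "rr t * u t = t * r0" if "0 \<le> t" "t \<le> 1" for t
  proof (cases "rr t = 0")
    case True
    then have "t * r0 + (1 - t) * r1 = 0" unfolding rr_eq by simp
    moreover have "0 \<le> t * r0" "0 \<le> (1 - t) * r1" using that r by auto
    ultimately have "t * r0 = 0" by linarith
    then show ?thesis using True by simp
  qed (simp add: u_def)
  have F5: "(1 - rr t) * v t = t * (1 - r0)" if "0 \<le> t" "t \<le> 1" for t
  proof (cases "1 - rr t = 0")
    case True
    then have "t * (1 - r0) + (1 - t) * (1 - r1) = 0" unfolding rr1 by simp
    moreover have "0 \<le> t * (1 - r0)" "0 \<le> (1 - t) * (1 - r1)" using that r by auto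
    ultimately have "t * (1 - r0) = 0" by linarith
    then show ?thesis using True by simp
  qed (simp add: v_def)
  have g1x: "g1 x \<in> {0..1}" "g1 y \<in> {0..1}" unfolding g1_def using g1_range p r x01 y01 by blast+
  have g0x: "g0 x \<in> {0..1}" "g0 y \<in> {0..1}" unfolding g0_def using g0_range p r x01 y01 by blast+
  have ident: "(rr x * V (g1 x) + (1 - rr x) * V (g0 x)) - (rr y * V (g1 y) + (1 - rr y) * V (g0 y))
     = rr y * (V (g1 x) - V (g1 y)) + (1 - rr x) * (V (g0 x) - V (g0 y)) + (rr x - rr y) * (V (g1 x) - V (g0 y))"
    by (simp add: algebra_simps)
  have w1: "0 \<le> rr y" "0 \<le> 1 - rr x" "0 \<le> rr x - rr y" using rgx rgy rlt r by linarith+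
  have "\<bar>(rr x * V (g1 x) + (1 - rr x) * V (g0 x)) - (rr y * V (g1 y) + (1 - rr y) * V (g0 y))\<bar>
     = \<bar>rr y * (V (g1 x) - V (g1 y)) + (1 - rr x) * (V (g0 x) - V (g0 y)) + (rr x - rr y) * (V (g1 x) - V (g0 y))\<bar>"
    unfolding ident ..
  also have "\<dots> \<le> rr y * \<bar>V (g1 x) - V (g1 y)\<bar> + (1 - rr x) * \<bar>V (g0 x) - V (g0 y)\<bar> + (rr x - rr y) * \<bar>V (g1 x) - V (g0 y)\<bar>"
    using abs3[of "rr y * (V (g1 x) - V (g1 y))" "(1 - rr x) * (V (g0 x) - V (g0 y))" "(rr x - rr y) * (V (g1 x) - V (g0 y))"]
    unfolding abs_mult abs_of_nonneg[OF w1(1)] abs_of_nonneg[OF w1(2)] abs_of_nonneg[OF w1(3)] .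
  also have "\<dots> \<le> rr y * (L * \<bar>g1 x - g1 y\<bar> + \<delta>) + (1 - rr x) * (L * \<bar>g0 x - g0 y\<bar> + \<delta>) + (rr x - rr y) * (L * \<bar>g1 x - g0 y\<bar> + \<delta>)"
    using w1 lip g1x g0x by (intro add_mono mult_left_mono) auto
  also have "\<dots> = L * (rr y * \<bar>g1 x - g1 y\<bar> + (1 - rr x) * \<bar>g0 x - g0 y\<bar> + (rr x - rr y) * \<bar>g1 x - g0 y\<bar>) + \<delta>"
    by (simp add: algebra_simps)
  also have "rr y * \<bar>g1 x - g1 y\<bar> + (1 - rr x) * \<bar>g0 x - g0 y\<bar> + (rr x - rr y) * \<bar>g1 x - g0 y\<bar>
      = \<bar>d\<bar> * ((rr y * u y + (1 - rr y) * v y) - (rr x * u x + (1 - rr x) * v x))"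
    unfolding F1 F2 F3 by (simp add: algebra_simps)
  also have "(rr y * u y + (1 - rr y) * v y) - (rr x * u x + (1 - rr x) * v x) = y - x"
    unfolding F4[OF xy(1) order.trans[OF less_imp_le[OF xy(2)] xy(3)]] F4[OF order.trans[OF xy(1) less_imp_le[OF xy(2)]] xy(3)]
      F5[OF xy(1) order.trans[OF less_imp_le[OF xy(2)] xy(3)]] F5[OF order.trans[OF xy(1) less_imp_le[OF xy(2)]] xy(3)]
    by (simp add: algebra_simps)
  finally show ?thesis unfolding d_def rr_def g1_def g0_def
    by (simp add: mult.assoc)
qed


lemma deriv_bound_gen:
  fixes f :: "real \<Rightarrow> real"
  assumes lip: "\<And>a b. a \<in> {0..1} \<Longrightarrow> b \<in> {0..1} \<Longrightarrow> \<bar>f a - f b\<bar> \<le> L * \<bar>a - b\<bar>"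
    and x: "x \<in> {0..1}"
    and D: "(f has_real_derivative D) (at x within T)"
    and nb: "at x within T \<noteq> bot"
    and ev: "eventually (\<lambda>y. y \<in> {0..1}) (at x within T)"
  shows "\<bar>D\<bar> \<le> L"
proof -
  have "((\<lambda>y. (f y - f x) / (y - x)) \<longlongrightarrow> D) (at x within T)"
    using D by (simp add: has_field_derivative_iff)
  then have t: "((\<lambda>y. \<bar>(f y - f x) / (y - x)\<bar>) \<longlongrightarrow> \<bar>D\<bar>) (at x within T)"
    by (rule tendsto_rabs)
  have ne: "eventually (\<lambda>y. y \<noteq> x) (at x within T)"
    by (simp add: eventually_at_filter)
  have "eventually (\<lambda>y. \<bar>(f y - f x) / (y - x)\<bar> \<le> L) (at x within T)"
    using ev ne
  proof eventually_elim
    case (elim y)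
    then have "\<bar>f y - f x\<bar> \<le> L * \<bar>y - x\<bar>" using lip x by blast
    moreover have "\<bar>y - x\<bar> > 0" using elim by simp
    ultimately show ?case by (simp add: abs_divide divide_le_eq)
  qed
  then show ?thesis using tendsto_upperbound[OF t _ nb] by blast
qed

lemma deriv_bound:
  fixes f :: "real \<Rightarrow> real"
  assumes lip: "\<And>a b. a \<in> {0..1} \<Longrightarrow> b \<in> {0..1} \<Longrightarrow> \<bar>f a - f b\<bar> \<le> L * \<bar>a - b\<bar>"
    and x: "x \<in> {0..1}"
    and D: "(f has_real_derivative D) (at x within {0..1}) \<or>
            (x < 1 \<and> (f has_real_derivative D) (at_right x))"
  shows "\<bar>D\<bar> \<le> L"
  using D
proof
  assume D: "(f has_real_derivative D) (at x within {0..1})"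
  show ?thesis
  proof (rule deriv_bound_gen[OF lip x D])
    show "at x within {0..1} \<noteq> bot" using x
      by (simp add: trivial_limit_within islimpt_Icc)
    show "eventually (\<lambda>y. y \<in> {0..1}) (at x within {0..1})"
      by (simp add: eventually_at_filter)
  qed auto
next
  assume D: "x < 1 \<and> (f has_real_derivative D) (at_right x)"
  show ?thesis
  proof (rule deriv_bound_gen[OF lip x D[THEN conjunct2]])
    show "at_right x \<noteq> bot" by (rule trivial_limit_at_right_real)
    show "eventually (\<lambda>y. y \<in> {0..1}) (at_right x)"
      unfolding eventually_at_right[OF D[THEN conjunct1]] using x D
      by (intro exI[of _ 1]) auto
  qed auto
qed

theorem lemma9:
  fixes p00 p01 p10 p11 \<rho>0 \<rho>1 R0 R1 \<eta> \<beta> :: real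
    and K :: nat
    and V VS VNS :: "real \<Rightarrow> real"
  assumes trans: "0 \<le> p00" "0 \<le> p01" "0 \<le> p10" "0 \<le> p11"
      "p00 + p01 = 1" "p10 + p11 = 1"
    and K: "K \<ge> 1"
    and rho: "0 \<le> \<rho>0" "\<rho>1 \<le> 1" "\<rho>0 < \<rho>1"
    and R: "R0 < R1"
    and beta: "0 < \<beta>" "\<beta> < 1"
    and bdd: "bounded (V ` {0..1})" "bounded (VS ` {0..1})" "bounded (VNS ` {0..1})"
    and eqS: "\<And>\<pi>. \<pi> \<in> {0..1} \<Longrightarrow> VS \<pi> = RS R0 R1 \<pi> + \<beta> *
         (rhoB \<rho>0 \<rho>1 \<pi> * V (gamma1 p00 p10 \<rho>0 \<rho>1 \<pi>)
          + (1 - rhoB \<rho>0 \<rho>1 \<pi>) * V (gamma0 p00 p10 \<rho>0 \<rho>1 \<pi>))"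
    and eqNS: "\<And>\<pi>. \<pi> \<in> {0..1} \<Longrightarrow> VNS \<pi> = \<eta> + \<beta> * V (gamma2 p00 p10 K \<pi>)"
    and eqV: "\<And>\<pi>. \<pi> \<in> {0..1} \<Longrightarrow> V \<pi> = max (VS \<pi>) (VNS \<pi>)"
    and cond: "\<beta> < (1 + min 1 ((R1 - R0) / (\<rho>1 - \<rho>0))) / 4 \<or>
               (0 < \<bar>p00 - p10\<bar> \<and>
                \<bar>p00 - p10\<bar> < (1 + min 1 ((R1 - R0) / (\<rho>1 - \<rho>0))) / 4)"
  shows "\<forall>f \<in> {V, VS, VNS}. \<forall>\<pi> \<in> {0..1}. \<forall>D.
           ((f has_real_derivative D) (at \<pi> within {0..1}) \<or>
            (\<pi> < 1 \<and> (f has_real_derivative D) (at_right \<pi>)))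
           \<longrightarrow> \<bar>D\<bar> \<le> (1 / (1 - \<beta> * \<bar>p00 - p10\<bar>))
                      * max 1 ((R1 - R0) / (\<rho>1 - \<rho>0)) * (\<rho>1 - \<rho>0)"
proof -
  define d where "d = p00 - p10"
  define L where "L = (R1 - R0) / (1 - \<beta> * \<bar>d\<bar>)"
  have p: "0 \<le> p00" "p00 \<le> 1" "0 \<le> p10" "p10 \<le> 1" using trans by linarith+
  have r: "0 \<le> \<rho>0" "\<rho>0 < \<rho>1" "\<rho>1 \<le> 1" using rho by auto
  have d1: "\<bar>d\<bar> \<le> 1" unfolding d_def using p by linarith
  have bd: "\<beta> * \<bar>d\<bar> < 1"
  proof -
    have "\<beta> * \<bar>d\<bar> \<le> \<beta> * 1" using d1 beta by (intro mult_left_mono) auto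
    then show ?thesis using beta by linarith
  qed
  have L0: "0 \<le> L" unfolding L_def using bd R by simp
  have Leq: "(R1 - R0) + \<beta> * (L * \<bar>d\<bar>) = L"
    unfolding L_def using bd by (simp add: field_simps)
  have step: "\<bar>VS a - VS b\<bar> \<le> L * \<bar>a - b\<bar> + \<beta> * \<delta> \<and> \<bar>VNS a - VNS b\<bar> \<le> L * \<bar>a - b\<bar> + \<beta> * \<delta>
       \<and> \<bar>V a - V b\<bar> \<le> L * \<bar>a - b\<bar> + \<beta> * \<delta>"
    if lipV: "\<And>a b. a \<in> {0..1} \<Longrightarrow> b \<in> {0..1} \<Longrightarrow> \<bar>V a - V b\<bar> \<le> L * \<bar>a - b\<bar> + \<delta>"
      and ab: "a \<in> {0..1}" "b \<in> {0..1}" for a b \<delta>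
  proof -
    define C where "C = (\<lambda>t. rhoB \<rho>0 \<rho>1 t * V (gamma1 p00 p10 \<rho>0 \<rho>1 t)
          + (1 - rhoB \<rho>0 \<rho>1 t) * V (gamma0 p00 p10 \<rho>0 \<rho>1 t))"
    have Cl: "\<bar>C s - C t\<bar> \<le> L * \<bar>d\<bar> * \<bar>s - t\<bar> + \<delta>" if "s \<in> {0..1}" "t \<in> {0..1}" for s t
    proof (cases s t rule: linorder_cases)
      case less
      then show ?thesis using cont_lip[OF p r L0 lipV, of s t] that unfolding C_def d_def by auto
    next
      case equal
      have "0 \<le> L * \<bar>0\<bar> + \<delta>" using lipV[OF that(1) that(1)] by simp
      then show ?thesis using equal by simp
    next
      case greater
      then show ?thesis using cont_lip[OF p r L0 lipV, of t s] that unfolding C_def d_def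
        by (auto simp: abs_minus_commute)
    qed
    have RSd: "\<bar>RS R0 R1 a - RS R0 R1 b\<bar> = (R1 - R0) * \<bar>a - b\<bar>"
    proof -
      have "RS R0 R1 a - RS R0 R1 b = (R0 - R1) * (a - b)" unfolding RS_def by (simp add: algebra_simps)
      then show ?thesis using R by (simp add: abs_mult)
    qed
    have S: "\<bar>VS a - VS b\<bar> \<le> L * \<bar>a - b\<bar> + \<beta> * \<delta>"
    proof -
      have "VS a - VS b = (RS R0 R1 a - RS R0 R1 b) + \<beta> * (C a - C b)"
        using eqS[OF ab(1)] eqS[OF ab(2)] unfolding C_def by (simp add: algebra_simps)
      then have "\<bar>VS a - VS b\<bar> \<le> \<bar>RS R0 R1 a - RS R0 R1 b\<bar> + \<beta> * \<bar>C a - C b\<bar>"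
        using beta by (simp add: abs_mult order.trans[OF abs_triangle_ineq])
      also have "\<dots> \<le> (R1 - R0) * \<bar>a - b\<bar> + \<beta> * (L * \<bar>d\<bar> * \<bar>a - b\<bar> + \<delta>)"
        unfolding RSd using Cl[OF ab] beta by (intro add_left_mono mult_left_mono) auto
      also have "\<dots> = ((R1 - R0) + \<beta> * (L * \<bar>d\<bar>)) * \<bar>a - b\<bar> + \<beta> * \<delta>" by (simp add: algebra_simps)
      finally show ?thesis unfolding Leq .
    qed
    have NS: "\<bar>VNS a - VNS b\<bar> \<le> L * \<bar>a - b\<bar> + \<beta> * \<delta>"
    proof -
      have g2: "gamma2 p00 p10 K a \<in> {0..1}" "gamma2 p00 p10 K b \<in> {0..1}"
        using g2_range p ab by blast+
      have "\<bar>VNS a - VNS b\<bar> = \<beta> * \<bar>V (gamma2 p00 p10 K a) - V (gamma2 p00 p10 K b)\<bar>"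
        using eqNS[OF ab(1)] eqNS[OF ab(2)] beta by (simp add: abs_mult flip: right_diff_distrib)
      also have "\<dots> \<le> \<beta> * (L * \<bar>gamma2 p00 p10 K a - gamma2 p00 p10 K b\<bar> + \<delta>)"
        using lipV[OF g2] beta by (intro mult_left_mono) auto
      also have "\<bar>gamma2 p00 p10 K a - gamma2 p00 p10 K b\<bar> = \<bar>d\<bar> ^ K * \<bar>a - b\<bar>"
        unfolding g2_diff d_def by (simp add: abs_mult power_abs)
      also have "\<bar>d\<bar> ^ K \<le> \<bar>d\<bar>"
        using power_decreasing[OF K abs_ge_zero d1] by simp
      then have "\<beta> * (L * (\<bar>d\<bar> ^ K * \<bar>a - b\<bar>) + \<delta>) \<le> \<beta> * (L * (\<bar>d\<bar> * \<bar>a - b\<bar>) + \<delta>)"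
        using beta L0 by (intro mult_left_mono add_right_mono mult_right_mono) auto
      also have "\<dots> = \<beta> * (L * \<bar>d\<bar>) * \<bar>a - b\<bar> + \<beta> * \<delta>" by (simp add: algebra_simps)
      also have "\<dots> \<le> L * \<bar>a - b\<bar> + \<beta> * \<delta>"
        using Leq R by (intro add_right_mono mult_right_mono) auto
      finally show ?thesis .
    qed
    have "\<bar>V a - V b\<bar> \<le> max \<bar>VS a - VS b\<bar> \<bar>VNS a - VNS b\<bar>"
      unfolding eqV[OF ab(1)] eqV[OF ab(2)] by (rule max_diff_le)
    then have "\<bar>V a - V b\<bar> \<le> L * \<bar>a - b\<bar> + \<beta> * \<delta>" using S NS by linarith
    then show ?thesis using S NS by blast
  qed
  obtain B where B: "\<And>x. x \<in> {0..1} \<Longrightarrow> \<bar>V x\<bar> \<le> B"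
    using bdd(1) unfolding bounded_iff by (metis imageI real_norm_def)
  define Sd where "Sd = {\<bar>V a - V b\<bar> - L * \<bar>a - b\<bar> | a b. a \<in> {0..1} \<and> b \<in> {0..(1::real)}}"
  define \<delta> where "\<delta> = Sup Sd"
  have Sne: "Sd \<noteq> {}" unfolding Sd_def by (auto intro!: exI[of _ "0::real"])
  have Sbdd: "bdd_above Sd"
  proof (rule bdd_aboveI)
    fix s assume "s \<in> Sd"
    then obtain a b where s: "s = \<bar>V a - V b\<bar> - L * \<bar>a - b\<bar>" "a \<in> {0..1}" "b \<in> {0..1}"
      unfolding Sd_def by auto
    have "\<bar>V a - V b\<bar> \<le> 2 * B" using B[OF s(2)] B[OF s(3)] by linarith
    moreover have "0 \<le> L * \<bar>a - b\<bar>" using L0 by simp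
    ultimately show "s \<le> 2 * B" using s by linarith
  qed
  have lip\<delta>: "\<bar>V a - V b\<bar> \<le> L * \<bar>a - b\<bar> + \<delta>" if "a \<in> {0..1}" "b \<in> {0..1}" for a b
  proof -
    have "\<bar>V a - V b\<bar> - L * \<bar>a - b\<bar> \<in> Sd" unfolding Sd_def using that by blast
    then have "\<bar>V a - V b\<bar> - L * \<bar>a - b\<bar> \<le> \<delta>" unfolding \<delta>_def using Sbdd by (rule cSup_upper)
    then show ?thesis by linarith
  qed
  have "0 \<in> Sd" unfolding Sd_def by force
  then have d0: "0 \<le> \<delta>" unfolding \<delta>_def using Sbdd by (rule cSup_upper)
  have "Sup Sd \<le> \<beta> * \<delta>"
  proof (rule cSup_least[OF Sne])
    fix s assume "s \<in> Sd"
    then obtain a b where s: "s = \<bar>V a - V b\<bar> - L * \<bar>a - b\<bar>" "a \<in> {0..1}" "b \<in> {0..1}"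
      unfolding Sd_def by auto
    show "s \<le> \<beta> * \<delta>" using step[OF lip\<delta> s(2,3)] s(1) by linarith
  qed
  then have "\<delta> \<le> \<beta> * \<delta>" unfolding \<delta>_def .
  then have "(1 - \<beta>) * \<delta> \<le> 0" by (simp add: algebra_simps)
  then have "\<delta> \<le> 0" using beta by (simp add: mult_le_0_iff)
  then have "\<delta> = 0" using d0 by linarith
  then have lip0: "\<bar>V a - V b\<bar> \<le> L * \<bar>a - b\<bar> + 0" if "a \<in> {0..1}" "b \<in> {0..1}" for a b
    using lip\<delta>[OF that] by simp
  have all: "\<bar>f a - f b\<bar> \<le> L * \<bar>a - b\<bar>" if "f \<in> {V, VS, VNS}" "a \<in> {0..1}" "b \<in> {0..1}" for f a b
    using step[OF lip0 that(2,3)] that(1) by auto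
  have Lb: "L \<le> (1 / (1 - \<beta> * \<bar>p00 - p10\<bar>)) * max 1 ((R1 - R0) / (\<rho>1 - \<rho>0)) * (\<rho>1 - \<rho>0)"
  proof -
    have "R1 - R0 = ((R1 - R0) / (\<rho>1 - \<rho>0)) * (\<rho>1 - \<rho>0)" using r by simp
    also have "\<dots> \<le> max 1 ((R1 - R0) / (\<rho>1 - \<rho>0)) * (\<rho>1 - \<rho>0)"
      using r by (intro mult_right_mono) auto
    finally have "R1 - R0 \<le> max 1 ((R1 - R0) / (\<rho>1 - \<rho>0)) * (\<rho>1 - \<rho>0)" .
    moreover have "0 < 1 / (1 - \<beta> * \<bar>d\<bar>)" using bd by simp
    ultimately have "(1 / (1 - \<beta> * \<bar>d\<bar>)) * (R1 - R0) \<le> (1 / (1 - \<beta> * \<bar>d\<bar>)) * (max 1 ((R1 - R0) / (\<rho>1 - \<rho>0)) * (\<rho>1 - \<rho>0))"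
      by (intro mult_left_mono) auto
    then show ?thesis unfolding L_def d_def by (simp add: mult.assoc)
  qed
  show ?thesis
  proof (intro ballI allI impI)
    fix f \<pi> D assume f: "f \<in> {V, VS, VNS}" and pi: "\<pi> \<in> {0..1}"
      and D: "(f has_real_derivative D) (at \<pi> within {0..1}) \<or> (\<pi> < 1 \<and> (f has_real_derivative D) (at_right \<pi>))"
    have "\<bar>D\<bar> \<le> L" by (rule deriv_bound[OF all[OF f] pi D])
    then show "\<bar>D\<bar> \<le> (1 / (1 - \<beta> * \<bar>p00 - p10\<bar>)) * max 1 ((R1 - R0) / (\<rho>1 - \<rho>0)) * (\<rho>1 - \<rho>0)"
      using Lb by linarith
  qed
qed

end
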